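(* In the setting described in the context, assume condition (i). Assume moreover that there is a sequence $(\overline T_n)_n$ with $T_{2n}>\overline T_n$ for all $n$, such that for every $n\in\mathbb N$ and every $T\in(\overline T_n,T_{2n}]$ there is a constant $d_n>0$ (depending on $T$, independent of the data) with $$E_S(t_{2n}+T)\le d_n\int_{t_{2n}}^{t_{2n}+T}\|B_1^*(t)w_t(t)\|_{U_1}^2\,dt$$ for every weak solution $w$ of $w_{tt}+Aw+B_1(t)B_1^*(t)w_t=f(w)$ on $(t_{2n},t_{2n+1})$ with $w(t_{2n})=w_0^n\in V$, $w_t(t_{2n})=w_1^n\in H$ (here $E_S$ is the energy of $w$). Then every solution $u$ of $$u_{tt}(t)+Au(t)+B_1(t)B_1^*(t)u_t(t)+B_2(t)B_2^*(t)u_t(t-\tau)=f(u),\ t>0,\qquad u(0)=u_0,\ u_t(0)=u_1,$$ satisfies $E_S(t_{2n+1})\le\hat d_nE_S(t_{2n})$ for all $n\in\mathbb N$, where $\hat d_n=\frac{d_n}{d_n+1}$ and $d_n$ is the constant above corresponding to $T=T_{2n}$.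
   Context: $E_S(t)=\frac12(\|u(t)\|_V^2+\|u_t(t)\|_H^2)-\mathcal F(u(t))$. $H$ is a real Hilbert space, $A:\mathcal D(A)\to H$ a densely defined, self-adjoint, positive, coercive linear operator, $V=\mathcal D(A^{1/2})$ with $\|v\|_V=\|A^{1/2}v\|_H$, $V\hookrightarrow H\equiv H'\hookrightarrow V'$ densely. $U_1,U_2$ are real Hilbert spaces, $B_i(t)\in\mathcal L(U_i,H)$ with $B_1^*(t)B_2^*(t)=0$ for $t>0$. There is a sequence $0=t_0<t_1<\cdots$; $I_n=[t_n,t_{n+1})$, $T_n=t_{n+1}-t_n$; $B_2=0$ on $I_{2n}$, $B_1=0$ on $I_{2n+1}$, $B_1\in C^1([t_{2n},t_{2n+1}];\mathcal L(U_1,H))$, $B_2\in C^1([t_{2n+1},t_{2n+2}];\mathcal L(U_2,H))$. $\tau>0$ is the delay. $W$ is a Hilbert space with $\|u\|_W^2\le C\|u\|_H^2$ for $u\in H$. $f:V\to H$ is locally Lipschitz (for each $K>0$ there is $L(K)$ with $\|f(u)-f(v)\|_H\le L(K)\|u-v\|_V$ when $\|u\|_V,\|v\|_V\le K$), $\mathcal F:V\to\mathbb R$ with $\mathcal F(0)=0$, $\mathcal F'(u)v=\langle f(u),v\rangle_{V',V}$. (i): there are $0<m_{2n}\le M_{2n}$ with $m_{2n}\|u\|_W^2\le\|B_1^*(t)u\|_{U_1}^2\le M_{2n}\|u\|_W^2$ for $u\in H$, $t\in I_{2n}$. *)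

theory Defs
  imports "HOL-Analysis.Analysis"
begin

text \<open>A (possibly unbounded) linear operator on a real Hilbert space is modelled by its
domain D and a function T; values of T outside D are irrelevant.\<close>

definition lin_op_on :: "'h::real_inner set \<Rightarrow> ('h \<Rightarrow> 'h) \<Rightarrow> bool" where
  "lin_op_on D T \<longleftrightarrow> subspace D \<and>
     (\<forall>x\<in>D. \<forall>y\<in>D. \<forall>c::real. T (x + c *\<^sub>R y) = T x + c *\<^sub>R T y)"

text \<open>Densely defined and self-adjoint: symmetric and the adjoint domain equals D.\<close>
definition selfadjoint_op :: "'h::real_inner set \<Rightarrow> ('h \<Rightarrow> 'h) \<Rightarrow> bool" where
  "selfadjoint_op D T \<longleftrightarrow> lin_op_on D T \<and> closure D = UNIV \<and>
     (\<forall>x\<in>D. \<forall>y\<in>D. inner (T x) y = inner x (T y)) \<and>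
     (\<forall>y z. (\<forall>x\<in>D. inner (T x) y = inner x z) \<longrightarrow> y \<in> D)"

definition positive_op :: "'h::real_inner set \<Rightarrow> ('h \<Rightarrow> 'h) \<Rightarrow> bool" where
  "positive_op D T \<longleftrightarrow> (\<forall>x\<in>D. x \<noteq> 0 \<longrightarrow> inner (T x) x > 0)"

definition nonneg_op :: "'h::real_inner set \<Rightarrow> ('h \<Rightarrow> 'h) \<Rightarrow> bool" where
  "nonneg_op D T \<longleftrightarrow> (\<forall>x\<in>D. inner (T x) x \<ge> 0)"

definition coercive_op :: "'h::real_inner set \<Rightarrow> ('h \<Rightarrow> 'h) \<Rightarrow> bool" where
  "coercive_op D T \<longleftrightarrow> (\<exists>c>0. \<forall>x\<in>D. inner (T x) x \<ge> c * (norm x)\<^sup>2)"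

definition is_sqrt_op ::
  "'h::real_inner set \<Rightarrow> ('h \<Rightarrow> 'h) \<Rightarrow> 'h set \<Rightarrow> ('h \<Rightarrow> 'h) \<Rightarrow> bool" where
  "is_sqrt_op DA A DR R \<longleftrightarrow> selfadjoint_op DR R \<and> nonneg_op DR R \<and>
     DA = {x\<in>DR. R x \<in> DR} \<and> (\<forall>x\<in>DA. A x = R (R x))"

text \<open>Energy E_S(t) = 1/2 (||u(t)||_V^2 + ||u_t(t)||_H^2) - F(u(t)), with ||v||_V = ||R v||.\<close>
definition energy :: "('h::real_inner \<Rightarrow> 'h) \<Rightarrow> ('h \<Rightarrow> real) \<Rightarrow> (real \<Rightarrow> 'h)
    \<Rightarrow> (real \<Rightarrow> 'h) \<Rightarrow> real \<Rightarrow> real" where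
  "energy R F u ut s = (1/2) * ((norm (R (u s)))\<^sup>2 + (norm (ut s))\<^sup>2) - F (u s)"

text \<open>Weak solution on [a,b] of  u'' + A u + G = f(u), where G(s) is the (given) damping
term: u \<in> C([a,b];V) \<inter> C^1([a,b];H) with derivative ut, and for every test vector v \<in> V,
  <ut(r),v> - <ut(s),v> = \<integral>_s^r ( <f(u),v> - <A^(1/2) u, A^(1/2) v> - <G,v> ).\<close>
definition weak_sol_on :: "'h::{real_inner,complete_space} set \<Rightarrow> ('h \<Rightarrow> 'h) \<Rightarrow> ('h \<Rightarrow> 'h)
    \<Rightarrow> (real \<Rightarrow> 'h) \<Rightarrow> real \<Rightarrow> real \<Rightarrow> (real \<Rightarrow> 'h) \<Rightarrow> (real \<Rightarrow> 'h) \<Rightarrow> bool" where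
  "weak_sol_on DR R f G a b u ut \<longleftrightarrow> a \<le> b \<and>
     (\<forall>s\<in>{a..b}. u s \<in> DR) \<and>
     continuous_on {a..b} u \<and> continuous_on {a..b} (\<lambda>s. R (u s)) \<and>
     (\<forall>s\<in>{a..b}. (u has_vector_derivative ut s) (at s within {a..b})) \<and>
     continuous_on {a..b} ut \<and>
     (\<forall>v\<in>DR. \<forall>s r. a \<le> s \<and> s \<le> r \<and> r \<le> b \<longrightarrow>
        ((\<lambda>\<sigma>. inner (f (u \<sigma>)) v - inner (R (u \<sigma>)) (R v) - inner (G \<sigma>) v)
           has_integral (inner (ut r) v - inner (ut s) v)) {s..r})"

end

theory Submission
  imports Defs
begin

lemma subst_refl:
  fixes \<phi> :: "real \<Rightarrow> real"
  assumes "continuous_on UNIV \<phi>" "0 \<le> d"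
  shows "((\<lambda>q. \<phi> (t - q)) has_integral integral {t-d..t} \<phi>) {0..d}"
proof -
  have i: "\<phi> integrable_on {t-d..t}"
    by (rule integrable_continuous_interval) (rule continuous_on_subset[OF assms(1)], auto)
  have "((\<lambda>x. \<phi> (- x)) has_integral integral {t-d..t} \<phi>) {-t..-(t-d)}"
    by (simp only: has_integral_reflect_real) (rule integrable_integral[OF i])
  from has_integral_shift_real_ivl[OF this, of "-t"]
  show ?thesis by (simp add: algebra_simps)
qed

lemma subst_shift:
  fixes \<phi> :: "real \<Rightarrow> real"
  assumes "continuous_on UNIV \<phi>" "0 \<le> d"
  shows "((\<lambda>q. \<phi> (t - d + q)) has_integral integral {t-d..t} \<phi>) {0..d}"
proof -
  have i: "\<phi> integrable_on {t-d..t}"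
    by (rule integrable_continuous_interval) (rule continuous_on_subset[OF assms(1)], auto)
  from has_integral_shift_real_ivl[OF integrable_integral[OF i], of "t-d"]
  show ?thesis by (simp add: algebra_simps)
qed

lemma hib:
  fixes f :: "real \<Rightarrow> 'b::real_normed_vector"
  assumes "(f has_integral i) {x..y}" "x \<le> y" "0 \<le> K" "\<And>s. s\<in>{x..y} \<Longrightarrow> norm (f s) \<le> K"
  shows "norm i \<le> K * (y - x)"
  using has_integral_bound_real[of K "{}" f i x y] assms by auto

lemma inner_int:
  fixes f :: "real \<Rightarrow> 'h::real_inner"
  assumes "(f has_integral i) S"
  shows "((\<lambda>s. inner z (f s)) has_integral inner z i) S"
  using has_integral_linear[OF assms bounded_linear_inner_right[of z]] by (simp add: o_def)

lemma eps_zero: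
  fixes X K :: real
  assumes "\<And>\<epsilon>. \<epsilon> > 0 \<Longrightarrow> \<bar>X\<bar> \<le> K * \<epsilon>"
  shows "X = 0"
proof (rule ccontr)
  assume "X \<noteq> 0"
  have K: "K \<ge> 0" using assms[of 1] by simp
  define \<epsilon> where "\<epsilon> = \<bar>X\<bar> / (2 * (K + 1))"
  have "\<epsilon> > 0" using \<open>X \<noteq> 0\<close> K by (simp add: \<epsilon>_def)
  with assms have "\<bar>X\<bar> \<le> K * \<epsilon>" by blast
  also have "\<dots> < \<bar>X\<bar>" using \<open>X \<noteq> 0\<close> K
    by (simp add: \<epsilon>_def field_simps) (smt (verit, ccfv_SIG) mult_nonneg_nonneg zero_less_abs_iff)
  finally show False by simp
qed

lemma ucE:
  fixes f :: "real \<Rightarrow> 'b::metric_space"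
  assumes "uniformly_continuous_on UNIV f" "\<epsilon> > 0"
  obtains d where "d > 0" "\<And>x y. \<bar>x - y\<bar> < d \<Longrightarrow> dist (f x) (f y) < \<epsilon>"
proof -
  from assms obtain d where "d > 0" "\<forall>x\<in>UNIV. \<forall>x'\<in>UNIV. dist x' x < d \<longrightarrow> dist (f x') (f x) < \<epsilon>"
    unfolding uniformly_continuous_on_def by blast
  then show ?thesis using that[of d] by (auto simp: dist_real_def)
qed

lemma integral_poly_tri:
  assumes "0 \<le> (d::real)"
  shows "((\<lambda>q. d - q) has_integral d^2/2) {0..d}"
proof -
  have "((\<lambda>q. d - q) has_integral ((\<lambda>q. d*q - q^2/2) d - (\<lambda>q. d*q - q^2/2) 0)) {0..d}"
    by (rule fundamental_theorem_of_calculus[OF assms])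
       (auto intro!: derivative_eq_intros simp: has_real_derivative_iff_has_vector_derivative[symmetric])
  then show ?thesis by (simp add: power2_eq_square)
qed

lemma int_antider:
  fixes g :: "real \<Rightarrow> real"
  assumes "continuous_on UNIV g" "p0 \<le> x" "x \<le> y"
  shows "(g has_integral (integral {p0..y} g - integral {p0..x} g)) {x..y}"
proof -
  have i: "g integrable_on {p0..y}"
    by (rule integrable_continuous_interval) (rule continuous_on_subset[OF assms(1)], auto)
  have "integral {p0..x} g + integral {x..y} g = integral {p0..y} g"
    using Henstock_Kurzweil_Integration.integral_combine[OF assms(2,3) i] .
  moreover have "g integrable_on {x..y}"
    by (rule integrable_continuous_interval) (rule continuous_on_subset[OF assms(1)], auto)
  ultimately show ?thesis by (metis add_diff_cancel_left' integrable_integral)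
qed

lemma abs_inner_diff:
  fixes a b c d :: "'h::real_inner"
  assumes "norm b \<le> W1" "norm c \<le> W2" "norm (a - c) \<le> e1" "norm (b - d) \<le> e2"
  shows "\<bar>inner a b - inner c d\<bar> \<le> e1 * W1 + W2 * e2"
proof -
  have "inner a b - inner c d = inner (a - c) b + inner c (b - d)"
    by (simp add: inner_diff_left inner_diff_right)
  also have "\<bar>\<dots>\<bar> \<le> \<bar>inner (a - c) b\<bar> + \<bar>inner c (b - d)\<bar>" by (rule abs_triangle_ineq)
  also have "\<bar>inner (a - c) b\<bar> \<le> norm (a - c) * norm b" by (rule Cauchy_Schwarz_ineq2)
  also have "\<dots> \<le> e1 * W1" using assms by (meson mult_mono norm_ge_zero order_trans)
  also have "\<bar>inner c (b - d)\<bar> \<le> norm c * norm (b - d)" by (rule Cauchy_Schwarz_ineq2)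
  also have "\<dots> \<le> W2 * e2" using assms by (meson mult_mono norm_ge_zero order_trans)
  finally show ?thesis by simp
qed

lemma quad_core:
  fixes u w h Ru :: "real \<Rightarrow> 'h::{real_inner,complete_space}"
  assumes aB: "a < B"
  and der: "\<And>s. s \<in> {a..B} \<Longrightarrow> (u has_vector_derivative w s) (at s within {a..B})"
  and ucw: "uniformly_continuous_on UNIV w" and ucR: "uniformly_continuous_on UNIV Ru"
  and uch: "uniformly_continuous_on UNIV h"
  and bw: "\<And>s. norm (w s) \<le> Wb" and bR: "\<And>s. norm (Ru s) \<le> Rb" and bh: "\<And>s. norm (h s) \<le> Hb"
  and WF: "\<And>x y. a \<le> x \<Longrightarrow> x \<le> y \<Longrightarrow> y \<le> B \<Longrightarrow>
     ((\<lambda>\<sigma>. inner (h \<sigma>) (u y - u x) - inner (Ru \<sigma>) (Ru y - Ru x)) has_integral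
        inner (w y - w x) (u y - u x)) {x..y}"
  shows "((\<lambda>s. inner (h s) (w s)) has_integral
     ((norm (w B))\<^sup>2 + (norm (Ru B))\<^sup>2 - (norm (w a))\<^sup>2 - (norm (Ru a))\<^sup>2) / 2) {a..B}"
proof -
  define e where "e \<sigma> \<rho> = inner (w \<sigma>) (w \<rho>) + inner (Ru \<sigma>) (Ru \<rho>)" for \<sigma> \<rho>
  have cw: "continuous_on UNIV w" using ucw uniformly_continuous_imp_continuous by blast
  have cR: "continuous_on UNIV Ru" using ucR uniformly_continuous_imp_continuous by blast
  have ch: "continuous_on UNIV h" using uch uniformly_continuous_imp_continuous by blast
  have Wb0: "Wb \<ge> 0" using bw[of 0] norm_ge_zero order_trans by blast
  have Rb0: "Rb \<ge> 0" using bR[of 0] norm_ge_zero order_trans by blast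
  have Hb0: "Hb \<ge> 0" using bh[of 0] norm_ge_zero order_trans by blast
  have esym: "e x y = e y x" for x y by (simp add: e_def inner_commute)
  have ce2: "continuous_on UNIV (\<lambda>p. e (f1 p) (f2 p))" if "continuous_on UNIV f1" "continuous_on UNIV f2"
    for f1 f2 :: "'z::topological_space \<Rightarrow> real"
  proof -
    have "continuous_on UNIV (\<lambda>x. w (f1 x))" "continuous_on UNIV (\<lambda>x. w (f2 x))"
         "continuous_on UNIV (\<lambda>x. Ru (f1 x))" "continuous_on UNIV (\<lambda>x. Ru (f2 x))"
      using continuous_on_compose2[OF cw that(1)] continuous_on_compose2[OF cw that(2)]
        continuous_on_compose2[OF cR that(1)] continuous_on_compose2[OF cR that(2)] by auto
    then show ?thesis unfolding e_def by (intro continuous_intros) auto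
  qed
  have chw: "continuous_on UNIV (\<lambda>s. inner (h s) (w s))"
    using ch cw by (intro continuous_intros)
  have U: "((\<lambda>\<rho>. inner z (w \<rho>)) has_integral inner z (u y - u x)) {x..y}"
    if "a \<le> x" "x \<le> y" "y \<le> B" for x y z
  proof -
    have "((\<lambda>\<rho>. inner z (w \<rho>)) has_integral (inner z (u y) - inner z (u x))) {x..y}"
      by (rule fundamental_theorem_of_calculus[of x y "\<lambda>t. inner z (u t)" "\<lambda>t. inner z (w t)", OF that(2)])
         (use that in \<open>auto intro!: bounded_linear.has_vector_derivative[OF bounded_linear_inner_right]
               has_vector_derivative_within_subset[OF der]\<close>)
    then show ?thesis by (simp add: inner_diff_right)
  qed
  have SS: "((\<lambda>\<rho>. e y \<rho> - e x \<rho>) has_integral integral {x..y} (\<lambda>\<sigma>. inner (h \<sigma>) (u y - u x))) {x..y}"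
    if xy: "a \<le> x" "x \<le> y" "y \<le> B" for x y
  proof -
    define \<Delta> where "\<Delta> = u y - u x"
    define dw where "dw = w y - w x"
    define dR where "dR = Ru y - Ru x"
    define J where "J = integral {x..y} (\<lambda>\<sigma>. inner (h \<sigma>) \<Delta>)"
    have 1: "((\<lambda>\<rho>. inner dw (w \<rho>)) has_integral inner dw \<Delta>) {x..y}"
      unfolding \<Delta>_def by (rule U[OF xy])
    have 2: "((\<lambda>\<sigma>. inner (h \<sigma>) \<Delta> - inner (Ru \<sigma>) dR) has_integral inner dw \<Delta>) {x..y}"
      using WF[OF xy] unfolding \<Delta>_def dR_def dw_def .
    have 3: "((\<lambda>\<sigma>. inner (h \<sigma>) \<Delta>) has_integral J) {x..y}"
      unfolding J_def
      by (rule integrable_integral, rule integrable_continuous_interval)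
         (use ch in \<open>auto intro!: continuous_intros intro: continuous_on_subset\<close>)
    have 4: "((\<lambda>\<sigma>. inner dR (Ru \<sigma>)) has_integral J - inner dw \<Delta>) {x..y}"
      using has_integral_diff[OF 3 2] by (simp add: inner_commute)
    have "((\<lambda>\<rho>. inner dw (w \<rho>) + inner dR (Ru \<rho>)) has_integral inner dw \<Delta> + (J - inner dw \<Delta>)) {x..y}"
      by (rule has_integral_add[OF 1 4])
    moreover have "e y \<rho> - e x \<rho> = inner dw (w \<rho>) + inner dR (Ru \<rho>)" for \<rho>
      by (simp add: e_def dw_def dR_def inner_diff_left)
    ultimately show ?thesis by (simp add: J_def \<Delta>_def)
  qed
  define I where "I = integral {a..B} (\<lambda>s. inner (h s) (w s))"
  have Iint: "((\<lambda>s. inner (h s) (w s)) has_integral I) {a..B}"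
    unfolding I_def by (rule integrable_integral, rule integrable_continuous_interval)
       (use chw in \<open>auto intro: continuous_on_subset\<close>)
  define K where "K = 8*(Wb+Rb) + 2*(B-a)*(Wb+Hb) + 2*Hb*Wb"
  have X0: "e B B - e a a - 2 * I = 0"
  proof (rule eps_zero[of _ K])
    fix \<epsilon> :: real assume \<epsilon>: "\<epsilon> > 0"

    obtain d1 where d1: "d1 > 0" "\<And>x y. \<bar>x - y\<bar> < d1 \<Longrightarrow> dist (w x) (w y) < \<epsilon>"
      using ucE[OF ucw \<epsilon>] by blast
    obtain d2 where d2: "d2 > 0" "\<And>x y. \<bar>x - y\<bar> < d2 \<Longrightarrow> dist (Ru x) (Ru y) < \<epsilon>"
      using ucE[OF ucR \<epsilon>] by blast
    obtain d3 where d3: "d3 > 0" "\<And>x y. \<bar>x - y\<bar> < d3 \<Longrightarrow> dist (h x) (h y) < \<epsilon>"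
      using ucE[OF uch \<epsilon>] by blast
    define \<delta> where "\<delta> = min (min d1 (min d2 d3) / 2) (min (B - a) \<epsilon>)"
    have \<delta>0: "\<delta> > 0" using d1 d2 d3 aB \<epsilon> by (simp add: \<delta>_def)
    have \<delta>B: "\<delta> \<le> B - a" and \<delta>\<epsilon>: "\<delta> \<le> \<epsilon>" by (auto simp: \<delta>_def)
    have closew: "norm (w x - w y) \<le> \<epsilon>" if "\<bar>x - y\<bar> \<le> \<delta>" for x y
      using d1(2)[of x y] that d1(1) d2(1) d3(1) \<delta>0 by (simp add: dist_norm \<delta>_def)
    have closeR: "norm (Ru x - Ru y) \<le> \<epsilon>" if "\<bar>x - y\<bar> \<le> \<delta>" for x y
      using d2(2)[of x y] that d1(1) d2(1) d3(1) \<delta>0 by (simp add: dist_norm \<delta>_def)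
    have closeh: "norm (h x - h y) \<le> \<epsilon>" if "\<bar>x - y\<bar> \<le> \<delta>" for x y
      using d3(2)[of x y] that d1(1) d2(1) d3(1) \<delta>0 by (simp add: dist_norm \<delta>_def)
    define \<epsilon>e where "\<epsilon>e = 2 * (Wb + Rb) * \<epsilon>"
    have eclose: "\<bar>e x1 x2 - e y1 y2\<bar> \<le> \<epsilon>e" if "\<bar>x1 - y1\<bar> \<le> \<delta>" "\<bar>x2 - y2\<bar> \<le> \<delta>" for x1 x2 y1 y2
    proof -
      have "\<bar>inner (w x1) (w x2) - inner (w y1) (w y2)\<bar> \<le> \<epsilon> * Wb + Wb * \<epsilon>"
        by (rule abs_inner_diff) (use bw closew that in auto)
      moreover have "\<bar>inner (Ru x1) (Ru x2) - inner (Ru y1) (Ru y2)\<bar> \<le> \<epsilon> * Rb + Rb * \<epsilon>"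
        by (rule abs_inner_diff) (use bR closeR that in auto)
      ultimately show ?thesis unfolding e_def \<epsilon>e_def by (simp add: algebra_simps)
    qed
    define b where "b = a + \<delta>"
    have bB: "b \<le> B" using \<delta>B by (simp add: b_def)
    define kk where "kk t q = integral {t - \<delta> + q..t} (\<lambda>s. e s (s - q))" for t q
    define dk where "dk t q = e t (t - q) - e (t - \<delta> + q) (t - \<delta>)" for t q
    have cg: "continuous_on UNIV (\<lambda>s. e s (s - q))" for q
      by (rule ce2) (auto intro!: continuous_intros)
    have cdk1: "continuous_on UNIV (\<lambda>p::real\<times>real. dk (fst p) (snd p))"
      unfolding dk_def by (intro continuous_on_diff ce2) (auto intro!: continuous_intros)
    have cdk2: "continuous_on UNIV (\<lambda>p::real\<times>real. dk (snd p) (fst p))"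
      unfolding dk_def by (intro continuous_on_diff ce2) (auto intro!: continuous_intros)
    have C1: "((\<lambda>t. dk t q) has_integral (kk B q - kk b q)) {b..B}" if q: "q \<in> {0..\<delta>}" for q
    proof -
      define g where "g s = e s (s - q)" for s
      define P where "P x = integral {a - 1..x} g" for x
      have cgg: "continuous_on UNIV g" unfolding g_def by (rule cg)
      have A1: "(g has_integral P B - P b) {b..B}"
        unfolding P_def by (rule int_antider[OF cgg]) (use bB \<delta>0 in \<open>auto simp: b_def\<close>)
      have A2: "(g has_integral P (B - \<delta> + q) - P (b - \<delta> + q)) {b - \<delta> + q..B - \<delta> + q}"
        unfolding P_def by (rule int_antider[OF cgg]) (use bB \<delta>0 q in \<open>auto simp: b_def\<close>)
      have A3: "((\<lambda>t. g (t + (q - \<delta>))) has_integral P (B - \<delta> + q) - P (b - \<delta> + q)) {b..B}"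
      proof -
        have "b - \<delta> + q - (q - \<delta>) = b" "B - \<delta> + q - (q - \<delta>) = B" by simp_all
        then show ?thesis using has_integral_shift_real_ivl[OF A2, of "q - \<delta>"] by simp
      qed
      have kB: "kk B q = P B - P (B - \<delta> + q)"
      proof -
        have "kk B q = integral {B - \<delta> + q..B} g" unfolding kk_def g_def by simp
        also have "\<dots> = P B - P (B - \<delta> + q)"
          unfolding P_def by (rule integral_unique, rule int_antider[OF cgg]) (use bB \<delta>0 q \<delta>B in \<open>auto simp: b_def\<close>)
        finally show ?thesis .
      qed
      have kb: "kk b q = P b - P (b - \<delta> + q)"
      proof -
        have "kk b q = integral {b - \<delta> + q..b} g" unfolding kk_def g_def by simp
        also have "\<dots> = P b - P (b - \<delta> + q)"
          unfolding P_def by (rule integral_unique, rule int_antider[OF cgg]) (use bB \<delta>0 q in \<open>auto simp: b_def\<close>)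
        finally show ?thesis .
      qed
      have "((\<lambda>t. g t - g (t + (q - \<delta>))) has_integral (P B - P b) - (P (B - \<delta> + q) - P (b - \<delta> + q))) {b..B}"
        by (rule has_integral_diff[OF A1 A3])
      moreover have "(\<lambda>t. g t - g (t + (q - \<delta>))) = (\<lambda>t. dk t q)"
      proof
        fix t
        have "t + (q - \<delta>) = t - \<delta> + q" "t + (q - \<delta>) - q = t - \<delta>" by simp_all
        then show "g t - g (t + (q - \<delta>)) = dk t q" by (simp only: g_def dk_def)
      qed
      moreover have "(P B - P b) - (P (B - \<delta> + q) - P (b - \<delta> + q)) = kk B q - kk b q"
        by (simp add: kB kb)
      ultimately show ?thesis by simp
    qed
    define M where "M q = integral {b..B} (\<lambda>t. dk t q)" for q
    define N where "N t = integral {0..\<delta>} (dk t)" for t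
    have cM: "continuous_on UNIV M"
    proof -
      have "continuous_on (UNIV \<times> cbox b B) (\<lambda>(q, t). dk t q)"
        using continuous_on_subset[OF cdk2] by (simp add: split_beta)
      from integral_continuous_on_param[OF this] show ?thesis by (simp add: M_def)
    qed
    have cN: "continuous_on UNIV N"
    proof -
      have "continuous_on (UNIV \<times> cbox 0 \<delta>) (\<lambda>(t, q). dk t q)"
        using continuous_on_subset[OF cdk1] by (simp add: split_beta)
      from integral_continuous_on_param[OF this] show ?thesis by (simp add: N_def)
    qed
    have Mint: "(M has_integral integral {0..\<delta>} M) {0..\<delta>}"
      by (rule integrable_integral, rule integrable_continuous_interval) (rule continuous_on_subset[OF cM], auto)
    have Nint: "(N has_integral integral {b..B} N) {b..B}"
      by (rule integrable_integral, rule integrable_continuous_interval) (rule continuous_on_subset[OF cN], auto)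
    have sw: "integral {b..B} N = integral {0..\<delta>} M"
    proof -
      have "continuous_on (cbox (b, 0) (B, \<delta>)) (\<lambda>(x, y). dk x y)"
        using continuous_on_subset[OF cdk1] by (simp add: split_beta)
      from integral_swap_continuous[OF this] show ?thesis by (simp add: M_def[abs_def] N_def[abs_def])
    qed
    have MK: "M q = kk B q - kk b q" if "q \<in> {0..\<delta>}" for q
      unfolding M_def using C1[OF that] by (rule integral_unique)
    define D where "D t = integral {t - \<delta>..t} (\<lambda>\<sigma>. inner (h \<sigma>) (u t - u (t - \<delta>)))" for t
    have ND: "N t = D t" if t: "t \<in> {b..B}" for t
    proof -
      have c1: "continuous_on UNIV (e t)" using ce2[of "\<lambda>_. t" "\<lambda>x. x"] by (simp add: continuous_on_const)
      have c2: "continuous_on UNIV (\<lambda>\<sigma>. e \<sigma> (t - \<delta>))"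
        using ce2[of "\<lambda>x. x" "\<lambda>_. t - \<delta>"] by (simp add: continuous_on_const)
      have ee2: "(\<lambda>\<sigma>. e \<sigma> (t - \<delta>)) = e (t - \<delta>)" by (rule ext, rule esym)
      have c3: "continuous_on UNIV (e (t - \<delta>))" using c2 unfolding ee2 .
      have "(dk t has_integral integral {t - \<delta>..t} (e t) - integral {t - \<delta>..t} (\<lambda>\<sigma>. e \<sigma> (t - \<delta>))) {0..\<delta>}"
        unfolding dk_def
        by (rule has_integral_diff[OF subst_refl[OF c1] subst_shift[OF c2]]) (use \<delta>0 in auto)
      then have 1: "N t = integral {t - \<delta>..t} (e t) - integral {t - \<delta>..t} (e (t - \<delta>))"
        unfolding N_def ee2 by (rule integral_unique)
      have i1: "(e t has_integral integral {t - \<delta>..t} (e t)) {t - \<delta>..t}"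
        by (rule integrable_integral, rule integrable_continuous_interval) (rule continuous_on_subset[OF c1], auto)
      have i2: "(e (t - \<delta>) has_integral integral {t - \<delta>..t} (e (t - \<delta>))) {t - \<delta>..t}"
        by (rule integrable_integral, rule integrable_continuous_interval) (rule continuous_on_subset[OF c3], auto)
      have "((\<lambda>\<rho>. e t \<rho> - e (t - \<delta>) \<rho>) has_integral D t) {t - \<delta>..t}"
        unfolding D_def by (rule SS) (use t \<delta>0 in \<open>auto simp: b_def\<close>)
      from has_integral_unique[OF has_integral_diff[OF i1 i2] this] 1 show ?thesis by simp
    qed
    have kkbound: "\<bar>kk x q - (\<delta> - q) * E0\<bar> \<le> (\<delta> - q) * \<epsilon>e"
      if q: "q \<in> {0..\<delta>}" and cl: "\<And>s. s \<in> {x - \<delta> + q..x} \<Longrightarrow> \<bar>e s (s - q) - E0\<bar> \<le> \<epsilon>e" for x q E0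
    proof -
      have i: "((\<lambda>s. e s (s - q)) has_integral kk x q) {x - \<delta> + q..x}"
        unfolding kk_def
        by (rule integrable_integral, rule integrable_continuous_interval) (rule continuous_on_subset[OF cg], auto)
      have c: "((\<lambda>s. E0) has_integral (\<delta> - q) * E0) {x - \<delta> + q..x}"
        using has_integral_const_real[of E0 "x - \<delta> + q" x] q by simp
      have "norm (kk x q - (\<delta> - q) * E0) \<le> \<epsilon>e * (x - (x - \<delta> + q))"
        by (rule hib[OF has_integral_diff[OF i c]]) (use q cl \<epsilon> Wb0 Rb0 in \<open>auto simp: \<epsilon>e_def\<close>)
      then show ?thesis by (simp add: algebra_simps)
    qed
    have kB: "\<bar>kk B q - (\<delta> - q) * e B B\<bar> \<le> (\<delta> - q) * \<epsilon>e" if q: "q \<in> {0..\<delta>}" for q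
      by (rule kkbound[OF q]) (rule eclose, use q in auto)
    have kb: "\<bar>kk b q - (\<delta> - q) * e a a\<bar> \<le> (\<delta> - q) * \<epsilon>e" if q: "q \<in> {0..\<delta>}" for q
      by (rule kkbound[OF q]) (rule eclose, use q in \<open>auto simp: b_def\<close>)
    have \<epsilon>e0: "\<epsilon>e \<ge> 0" using Wb0 Rb0 \<epsilon> by (simp add: \<epsilon>e_def)
    have E1: "\<bar>integral {0..\<delta>} M - \<delta>^2/2 * (e B B - e a a)\<bar> \<le> 2 * \<epsilon>e * \<delta> * \<delta>"
    proof -
      have p: "((\<lambda>q. (\<delta> - q) * (e B B - e a a)) has_integral \<delta>^2/2 * (e B B - e a a)) {0..\<delta>}"
        using has_integral_mult_left[OF integral_poly_tri[of \<delta>]] \<delta>0 by simp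
      have "norm (integral {0..\<delta>} M - \<delta>^2/2 * (e B B - e a a)) \<le> (2 * \<epsilon>e * \<delta>) * (\<delta> - 0)"
      proof (rule hib[OF has_integral_diff[OF Mint p]])
        fix q assume q: "q \<in> {0..\<delta>}"
        have "\<bar>M q - (\<delta> - q) * (e B B - e a a)\<bar> \<le> (\<delta> - q) * \<epsilon>e + (\<delta> - q) * \<epsilon>e"
          using kB[OF q] kb[OF q] MK[OF q] by (simp add: algebra_simps abs_diff_le_iff)
        also have "\<dots> \<le> 2 * \<epsilon>e * \<delta>" using q \<epsilon>e0 by (simp add: mult_right_mono algebra_simps)
        finally show "norm (M q - (\<delta> - q) * (e B B - e a a)) \<le> 2 * \<epsilon>e * \<delta>" by simp
      qed (use \<delta>0 \<epsilon>e0 in auto)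
      then show ?thesis by simp
    qed
    have E2: "\<bar>D t - \<delta> * \<delta> * inner (h t) (w t)\<bar> \<le> \<delta> * \<delta> * \<epsilon> * (Wb + Hb)" if t: "t \<in> {b..B}" for t
    proof -
      define \<Delta> where "\<Delta> = u t - u (t - \<delta>)"
      have tl: "a \<le> t - \<delta>" "t - \<delta> \<le> t" "t \<le> B" using t \<delta>0 by (auto simp: b_def)
      have Uz: "((\<lambda>\<sigma>. inner z (w \<sigma>)) has_integral inner z \<Delta>) {t - \<delta>..t}" for z
        unfolding \<Delta>_def by (rule U[OF tl])
      have n\<Delta>: "norm \<Delta> \<le> Wb * \<delta>"
      proof -
        have "norm (inner \<Delta> \<Delta>) \<le> (norm \<Delta> * Wb) * (t - (t - \<delta>))"
        proof (rule hib[OF Uz])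
          fix \<sigma> assume "\<sigma> \<in> {t - \<delta>..t}"
          have "\<bar>inner \<Delta> (w \<sigma>)\<bar> \<le> norm \<Delta> * norm (w \<sigma>)" by (rule Cauchy_Schwarz_ineq2)
          also have "\<dots> \<le> norm \<Delta> * Wb" by (rule mult_left_mono[OF bw]) simp
          finally show "norm (inner \<Delta> (w \<sigma>)) \<le> norm \<Delta> * Wb" by simp
        qed (use tl Wb0 in auto)
        then have "norm \<Delta> * norm \<Delta> \<le> norm \<Delta> * (Wb * \<delta>)"
          by (simp add: power2_norm_eq_inner[symmetric] power2_eq_square algebra_simps)
        then show ?thesis
          by (cases "norm \<Delta> = 0") (use Wb0 \<delta>0 in \<open>auto simp: mult_le_cancel_left\<close>)
      qed
      define z where "z = \<Delta> - \<delta> *\<^sub>R w t"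
      have nz: "norm z \<le> \<epsilon> * \<delta>"
      proof -
        have c: "((\<lambda>\<sigma>. inner z (w t)) has_integral \<delta> * inner z (w t)) {t - \<delta>..t}"
          using has_integral_const_real[of "inner z (w t)" "t - \<delta>" t] \<delta>0 by simp
        have "norm (inner z \<Delta> - \<delta> * inner z (w t)) \<le> (norm z * \<epsilon>) * (t - (t - \<delta>))"
        proof (rule hib[OF has_integral_diff[OF Uz c]])
          fix \<sigma> assume s: "\<sigma> \<in> {t - \<delta>..t}"
          have "\<bar>inner z (w \<sigma>) - inner z (w t)\<bar> = \<bar>inner z (w \<sigma> - w t)\<bar>" by (simp add: inner_diff_right)
          also have "\<dots> \<le> norm z * norm (w \<sigma> - w t)" by (rule Cauchy_Schwarz_ineq2)
          also have "\<dots> \<le> norm z * \<epsilon>" by (rule mult_left_mono[OF closew]) (use s in auto)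
          finally show "norm (inner z (w \<sigma>) - inner z (w t)) \<le> norm z * \<epsilon>" by simp
        qed (use tl \<epsilon> in auto)
        moreover have "inner z \<Delta> - \<delta> * inner z (w t) = inner z z" by (simp add: z_def inner_diff_right)
        ultimately have "norm z * norm z \<le> norm z * (\<epsilon> * \<delta>)"
          by (simp add: power2_norm_eq_inner[symmetric] power2_eq_square algebra_simps)
        then show ?thesis
          by (cases "norm z = 0") (use \<epsilon> \<delta>0 in \<open>auto simp: mult_le_cancel_left\<close>)
      qed
      have iD: "((\<lambda>\<sigma>. inner (h \<sigma>) \<Delta>) has_integral D t) {t - \<delta>..t}"
        unfolding D_def \<Delta>_def
        by (rule integrable_integral, rule integrable_continuous_interval)
           (use ch in \<open>auto intro!: continuous_intros intro: continuous_on_subset\<close>)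
      have c: "((\<lambda>\<sigma>. inner (h t) (\<delta> *\<^sub>R w t)) has_integral \<delta> * inner (h t) (\<delta> *\<^sub>R w t)) {t - \<delta>..t}"
        using has_integral_const_real[of "inner (h t) (\<delta> *\<^sub>R w t)" "t - \<delta>" t] \<delta>0 by simp
      have "norm (D t - \<delta> * inner (h t) (\<delta> *\<^sub>R w t)) \<le> (\<epsilon> * (Wb * \<delta>) + Hb * (\<epsilon> * \<delta>)) * (t - (t - \<delta>))"
      proof (rule hib[OF has_integral_diff[OF iD c]])
        fix \<sigma> assume s: "\<sigma> \<in> {t - \<delta>..t}"
        show "norm (inner (h \<sigma>) \<Delta> - inner (h t) (\<delta> *\<^sub>R w t)) \<le> \<epsilon> * (Wb * \<delta>) + Hb * (\<epsilon> * \<delta>)"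
        proof -
          have cl: "norm (h \<sigma> - h t) \<le> \<epsilon>" by (rule closeh) (use s in auto)
          from abs_inner_diff[OF n\<Delta> bh[of t] cl nz[unfolded z_def]] show ?thesis by simp
        qed
      qed (use tl \<epsilon> Wb0 Hb0 \<delta>0 in auto)
      then show ?thesis by (simp add: algebra_simps)
    qed
    define Ib where "Ib = integral {b..B} (\<lambda>s. inner (h s) (w s))"
    define Iab where "Iab = integral {a..b} (\<lambda>s. inner (h s) (w s))"
    have Ibint: "((\<lambda>s. inner (h s) (w s)) has_integral Ib) {b..B}"
      unfolding Ib_def by (rule integrable_integral, rule integrable_continuous_interval)
         (use chw in \<open>auto intro: continuous_on_subset\<close>)
    have Iabint: "((\<lambda>s. inner (h s) (w s)) has_integral Iab) {a..b}"
      unfolding Iab_def by (rule integrable_integral, rule integrable_continuous_interval)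
         (use chw in \<open>auto intro: continuous_on_subset\<close>)
    have Isplit: "I = Iab + Ib"
      using has_integral_unique[OF Iint has_integral_combine[OF _ bB Iabint Ibint]] \<delta>0 by (simp add: b_def)
    have E3: "\<bar>integral {b..B} N - \<delta> * \<delta> * Ib\<bar> \<le> (\<delta> * \<delta> * \<epsilon> * (Wb + Hb)) * (B - b)"
    proof -
      have "norm (integral {b..B} N - \<delta> * \<delta> * Ib) \<le> (\<delta> * \<delta> * \<epsilon> * (Wb + Hb)) * (B - b)"
      proof (rule hib[OF has_integral_diff[OF Nint has_integral_mult_right[OF Ibint]]])
        fix t assume t: "t \<in> {b..B}"
        show "norm (N t - \<delta> * \<delta> * inner (h t) (w t)) \<le> \<delta> * \<delta> * \<epsilon> * (Wb + Hb)"
          using E2[OF t] ND[OF t] by simp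
      qed (use bB \<delta>0 \<epsilon> Wb0 Hb0 in auto)
      then show ?thesis by simp
    qed
    have E4: "\<bar>Iab\<bar> \<le> (Hb * Wb) * (b - a)"
    proof -
      have "norm Iab \<le> (Hb * Wb) * (b - a)"
      proof (rule hib[OF Iabint])
        fix s :: real
        have "\<bar>inner (h s) (w s)\<bar> \<le> norm (h s) * norm (w s)" by (rule Cauchy_Schwarz_ineq2)
        also have "\<dots> \<le> Hb * Wb" by (rule mult_mono[OF bh bw]) (use Hb0 in auto)
        finally show "norm (inner (h s) (w s)) \<le> Hb * Wb" by simp
      qed (use \<delta>0 Hb0 Wb0 in \<open>auto simp: b_def\<close>)
      then show ?thesis by simp
    qed
    define X where "X = e B B - e a a - 2 * I"
    have "\<delta> * \<delta> / 2 * X = (\<delta>^2/2 * (e B B - e a a) - integral {0..\<delta>} M)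
            + (integral {b..B} N - \<delta> * \<delta> * Ib) - \<delta> * \<delta> * Iab"
      unfolding X_def Isplit sw by (simp add: power2_eq_square algebra_simps)
    moreover have "\<bar>\<delta> * \<delta> * Iab\<bar> \<le> \<delta> * \<delta> * ((Hb * Wb) * (b - a))"
      using E4 \<delta>0 by (simp add: abs_mult mult_left_mono)
    ultimately have "\<bar>\<delta> * \<delta> / 2 * X\<bar> \<le> 2 * \<epsilon>e * \<delta> * \<delta> + (\<delta> * \<delta> * \<epsilon> * (Wb + Hb)) * (B - b) + \<delta> * \<delta> * ((Hb * Wb) * (b - a))"
      using E1 E3 unfolding abs_le_iff by linarith
    also have "\<dots> \<le> \<delta> * \<delta> * (2 * \<epsilon>e + \<epsilon> * (Wb + Hb) * (B - a) + Hb * Wb * \<epsilon>)"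
    proof -
      have "(\<delta> * \<delta> * \<epsilon> * (Wb + Hb)) * (B - b) \<le> (\<delta> * \<delta> * \<epsilon> * (Wb + Hb)) * (B - a)"
        by (rule mult_left_mono) (use \<delta>0 \<epsilon> Wb0 Hb0 in \<open>auto simp: b_def\<close>)
      moreover have "\<delta> * \<delta> * ((Hb * Wb) * (b - a)) \<le> \<delta> * \<delta> * ((Hb * Wb) * \<epsilon>)"
        by (intro mult_left_mono) (use \<delta>0 \<delta>\<epsilon> Wb0 Hb0 in \<open>auto simp: b_def\<close>)
      ultimately show ?thesis by (simp add: algebra_simps)
    qed
    finally have "\<delta> * \<delta> * (\<bar>X\<bar> / 2) \<le> \<delta> * \<delta> * (2 * \<epsilon>e + \<epsilon> * (Wb + Hb) * (B - a) + Hb * Wb * \<epsilon>)"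
      using \<delta>0 by (simp add: abs_mult)
    then have "\<bar>X\<bar> / 2 \<le> 2 * \<epsilon>e + \<epsilon> * (Wb + Hb) * (B - a) + Hb * Wb * \<epsilon>"
      using \<delta>0 by (simp add: mult_le_cancel_left)
    then show "\<bar>e B B - e a a - 2 * I\<bar> \<le> K * \<epsilon>"
      unfolding X_def K_def \<epsilon>e_def by (simp add: algebra_simps)
  qed
  have ee: "e x x = (norm (w x))\<^sup>2 + (norm (Ru x))\<^sup>2" for x by (simp add: e_def power2_norm_eq_inner)
  have "((norm (w B))\<^sup>2 + (norm (Ru B))\<^sup>2 - (norm (w a))\<^sup>2 - (norm (Ru a))\<^sup>2) / 2 = I"
    using X0 ee[of a] ee[of B] by simp
  with Iint show ?thesis by simp
qed

lemma hvd_iff: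
  "(f has_vector_derivative w) (at x within s) \<longleftrightarrow>
    (\<forall>e>0. \<exists>d>0. \<forall>y\<in>s. \<bar>y - x\<bar> < d \<longrightarrow> norm (f y - f x - (y - x) *\<^sub>R w) \<le> e * \<bar>y - x\<bar>)"
  unfolding has_vector_derivative_def has_derivative_within_alt
  by (simp add: bounded_linear_scaleR_left)

lemma F_mvt:
  fixes R f :: "'h::real_inner \<Rightarrow> 'h" and F :: "'h \<Rightarrow> real"
  assumes Rl: "\<And>x c. x \<in> DR \<Longrightarrow> R (c *\<^sub>R x) = c *\<^sub>R R x"
    and Radd: "\<And>x y. x \<in> DR \<Longrightarrow> y \<in> DR \<Longrightarrow> R (x + y) = R x + R y"
    and Rdiff: "\<And>x y. x \<in> DR \<Longrightarrow> y \<in> DR \<Longrightarrow> R (x - y) = R x - R y"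
    and DRs: "subspace DR"
    and Fd: "\<forall>x\<in>DR. \<forall>\<epsilon>>0. \<exists>\<delta>>0. \<forall>v\<in>DR. norm (R v) < \<delta> \<longrightarrow>
                   \<bar>F (x + v) - F x - inner (f x) v\<bar> \<le> \<epsilon> * norm (R v)"
    and Lip: "\<And>x y. x \<in> DR \<Longrightarrow> y \<in> DR \<Longrightarrow> norm (R x) \<le> K \<Longrightarrow> norm (R y) \<le> K \<Longrightarrow>
                   norm (f x - f y) \<le> L * norm (R (x - y))"
    and L0: "L \<ge> 0"
    and x: "x \<in> DR" and v: "v \<in> DR" and K: "norm (R x) + norm (R v) \<le> K"
  shows "\<bar>F (x + v) - F x - inner (f x) v\<bar> \<le> L * norm (R v) * norm v"
proof -
  define \<phi> where "\<phi> \<theta> = F (x + \<theta> *\<^sub>R v)" for \<theta>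
  have yD: "x + \<theta> *\<^sub>R v \<in> DR" for \<theta> using DRs x v by (simp add: subspace_def)
  have der: "(\<phi> has_real_derivative inner (f (x + \<theta> *\<^sub>R v)) v) (at \<theta>)" for \<theta>
  proof -
    define y where "y = x + \<theta> *\<^sub>R v"
    have y: "y \<in> DR" unfolding y_def by (rule yD)
    have "\<exists>d>0. \<forall>\<theta>'\<in>UNIV. \<bar>\<theta>' - \<theta>\<bar> < d \<longrightarrow>
            norm (\<phi> \<theta>' - \<phi> \<theta> - (\<theta>' - \<theta>) *\<^sub>R inner (f y) v) \<le> e * \<bar>\<theta>' - \<theta>\<bar>" if e: "e > 0" for e
    proof -
      define e1 where "e1 = e / (norm (R v) + 1)"
      have np: "norm (R v) + 1 > 0" by (smt (verit) norm_ge_zero)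
      have e1: "e1 > 0" using e np by (simp add: e1_def)
      obtain d1 where d1: "d1 > 0" "\<And>v'. v' \<in> DR \<Longrightarrow> norm (R v') < d1 \<Longrightarrow>
          \<bar>F (y + v') - F y - inner (f y) v'\<bar> \<le> e1 * norm (R v')"
        using Fd y e1 by meson
      show ?thesis
      proof (intro exI[of _ "d1 / (norm (R v) + 1)"] conjI ballI impI)
        show "d1 / (norm (R v) + 1) > 0" using d1 np by simp
        fix \<theta>' assume "\<bar>\<theta>' - \<theta>\<bar> < d1 / (norm (R v) + 1)"
        then have lt: "\<bar>\<theta>' - \<theta>\<bar> * (norm (R v) + 1) < d1" by (simp add: field_simps add_pos_nonneg)
        define v' where "v' = (\<theta>' - \<theta>) *\<^sub>R v"
        have v'D: "v' \<in> DR" using DRs v by (simp add: v'_def subspace_def)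
        have Rv': "norm (R v') = \<bar>\<theta>' - \<theta>\<bar> * norm (R v)" by (simp add: v'_def Rl[OF v])
        have "norm (R v') < d1" using lt Rv'
          by (smt (verit, best) mult_left_mono abs_ge_zero)
        from d1(2)[OF v'D this]
        have "\<bar>F (y + v') - F y - inner (f y) v'\<bar> \<le> e1 * (\<bar>\<theta>' - \<theta>\<bar> * norm (R v))" by (simp add: Rv')
        also have "\<dots> \<le> e * \<bar>\<theta>' - \<theta>\<bar>"
        proof -
          have "e1 * norm (R v) = e * (norm (R v) / (norm (R v) + 1))" by (simp add: e1_def)
          also have "\<dots> \<le> e * 1" using e np by (intro mult_left_mono) auto
          finally have "e1 * norm (R v) \<le> e" by simp
          then show ?thesis by (metis abs_ge_zero mult.commute mult.left_commute mult_left_mono)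
        qed
        moreover have "y + v' = x + \<theta>' *\<^sub>R v" by (simp add: y_def v'_def algebra_simps)
        ultimately show "norm (\<phi> \<theta>' - \<phi> \<theta> - (\<theta>' - \<theta>) *\<^sub>R inner (f y) v) \<le> e * \<bar>\<theta>' - \<theta>\<bar>"
          by (simp add: \<phi>_def y_def[symmetric] v'_def)
      qed
    qed
    then show ?thesis unfolding has_real_derivative_iff_has_vector_derivative hvd_iff y_def by blast
  qed
  have cont: "continuous_on {0..1} \<phi>"
    using der by (meson DERIV_isCont continuous_at_imp_continuous_on)
  obtain l z where z: "0 < z" "z < 1" "DERIV \<phi> z :> l" "\<phi> 1 - \<phi> 0 = (1 - 0) * l"
    using MVT[of 0 1 \<phi>] cont der by (auto simp: real_differentiable_def)
  have l: "l = inner (f (x + z *\<^sub>R v)) v" using DERIV_unique[OF z(3) der] .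
  have "F (x + v) - F x - inner (f x) v = inner (f (x + z *\<^sub>R v) - f x) v"
    using z(4) l by (simp add: \<phi>_def inner_diff_left)
  also have "\<bar>\<dots>\<bar> \<le> norm (f (x + z *\<^sub>R v) - f x) * norm v" by (rule Cauchy_Schwarz_ineq2)
  also have "norm (f (x + z *\<^sub>R v) - f x) \<le> L * norm (R (x + z *\<^sub>R v - x))"
  proof (rule Lip[OF yD x])
    have "R (x + z *\<^sub>R v) = R x + z *\<^sub>R R v" using Radd[OF x] Rl[OF v] DRs v
      by (simp add: subspace_def)
    then have "norm (R (x + z *\<^sub>R v)) \<le> norm (R x) + z * norm (R v)"
      using z by (metis abs_of_pos norm_scaleR norm_triangle_ineq)
    also have "\<dots> \<le> norm (R x) + norm (R v)" using z by (simp add: mult_left_le_one_le)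
    finally show "norm (R (x + z *\<^sub>R v)) \<le> K" using K by simp
    show "norm (R x) \<le> K" using K norm_ge_zero[of "R v"] by linarith
  qed
  also have "norm (R (x + z *\<^sub>R v - x)) = z * norm (R v)" using z Rl[OF v] by simp
  also have "L * (z * norm (R v)) \<le> L * norm (R v)"
    using z L0 by (simp add: mult_left_le_one_le mult_left_mono)
  finally show ?thesis by (simp add: mult_right_mono)
qed

lemma F_chain:
  fixes R f :: "'h::real_inner \<Rightarrow> 'h" and F :: "'h \<Rightarrow> real" and u w :: "real \<Rightarrow> 'h"
  assumes Rl: "\<And>x c. x \<in> DR \<Longrightarrow> R (c *\<^sub>R x) = c *\<^sub>R R x"
    and Radd: "\<And>x y. x \<in> DR \<Longrightarrow> y \<in> DR \<Longrightarrow> R (x + y) = R x + R y"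
    and Rdiff: "\<And>x y. x \<in> DR \<Longrightarrow> y \<in> DR \<Longrightarrow> R (x - y) = R x - R y"
    and DRs: "subspace DR"
    and Fd: "\<forall>x\<in>DR. \<forall>\<epsilon>>0. \<exists>\<delta>>0. \<forall>v\<in>DR. norm (R v) < \<delta> \<longrightarrow>
                   \<bar>F (x + v) - F x - inner (f x) v\<bar> \<le> \<epsilon> * norm (R v)"
    and Lipall: "\<forall>K>0. \<exists>L. \<forall>x\<in>DR. \<forall>y\<in>DR. norm (R x) \<le> K \<and> norm (R y) \<le> K \<longrightarrow>
                   norm (f x - f y) \<le> L * norm (R (x - y))"
    and aB: "a \<le> B" and uD: "\<And>s. s \<in> {a..B} \<Longrightarrow> u s \<in> DR"
    and cRu: "continuous_on {a..B} (\<lambda>s. R (u s))"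
    and der: "\<And>s. s \<in> {a..B} \<Longrightarrow> (u has_vector_derivative w s) (at s within {a..B})"
  shows "((\<lambda>s. inner (f (u s)) (w s)) has_integral F (u B) - F (u a)) {a..B}"
proof -
  have "compact ((\<lambda>s. R (u s)) ` {a..B})" by (rule compact_continuous_image[OF cRu]) simp
  then obtain Kb where Kb: "\<And>s. s \<in> {a..B} \<Longrightarrow> norm (R (u s)) \<le> Kb"
    using compact_imp_bounded bounded_iff by (metis image_eqI)
  define K where "K = 3 * \<bar>Kb\<bar> + 1"
  obtain L0 where L0: "\<forall>x\<in>DR. \<forall>y\<in>DR. norm (R x) \<le> K \<and> norm (R y) \<le> K \<longrightarrow>
                   norm (f x - f y) \<le> L0 * norm (R (x - y))"
    using Lipall K_def by (metis abs_ge_zero add_nonneg_pos mult_nonneg_nonneg zero_less_one zero_le_numeral)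
  define L where "L = max L0 0"
  have Lip: "norm (f x - f y) \<le> L * norm (R (x - y))"
    if "x \<in> DR" "y \<in> DR" "norm (R x) \<le> K" "norm (R y) \<le> K" for x y
  proof -
    have "norm (f x - f y) \<le> L0 * norm (R (x - y))" using L0 that by blast
    also have "\<dots> \<le> L * norm (R (x - y))" by (rule mult_right_mono) (auto simp: L_def)
    finally show ?thesis .
  qed
  have L0': "L \<ge> 0" by (simp add: L_def)
  show ?thesis
  proof (rule fundamental_theorem_of_calculus[of a B "\<lambda>s. F (u s)", OF aB])
    fix s assume s: "s \<in> {a..B}"
    define M1 where "M1 = norm (f (u s))"
    define W1 where "W1 = norm (w s)"
    show "((\<lambda>s. F (u s)) has_vector_derivative inner (f (u s)) (w s)) (at s within {a..B})"
      unfolding hvd_iff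
    proof (intro allI impI)
      fix e :: real assume e: "e > 0"
      define e1 where "e1 = e / (2 * (M1 + 1))"
      define e2 where "e2 = (e / 2) / (L + 1) / (W1 + 1)"
      have M10: "M1 \<ge> 0" "W1 \<ge> 0" by (simp_all add: M1_def W1_def)
      have e1: "e1 > 0" using e M10 by (simp add: e1_def)
      have e2: "e2 > 0" using e M10 L0' by (simp add: e2_def)
      obtain d1 where d1: "d1 > 0" "\<And>t. t \<in> {a..B} \<Longrightarrow> \<bar>t - s\<bar> < d1 \<Longrightarrow>
          norm (u t - u s - (t - s) *\<^sub>R w s) \<le> e1 * \<bar>t - s\<bar>"
        using der[OF s] e1 unfolding hvd_iff by blast
      obtain d2 where d2: "d2 > 0" "\<And>t. t \<in> {a..B} \<Longrightarrow> \<bar>t - s\<bar> < d2 \<Longrightarrow>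
          norm (u t - u s - (t - s) *\<^sub>R w s) \<le> 1 * \<bar>t - s\<bar>"
        using der[OF s] unfolding hvd_iff by (meson zero_less_one)
      obtain d3 where d3: "d3 > 0" "\<And>t. t \<in> {a..B} \<Longrightarrow> \<bar>t - s\<bar> < d3 \<Longrightarrow>
          dist (R (u t)) (R (u s)) < e2"
        using cRu s e2 unfolding continuous_on_iff dist_real_def by blast
      show "\<exists>d>0. \<forall>t\<in>{a..B}. \<bar>t - s\<bar> < d \<longrightarrow>
          norm (F (u t) - F (u s) - (t - s) *\<^sub>R inner (f (u s)) (w s)) \<le> e * \<bar>t - s\<bar>"
      proof (intro exI[of _ "min d1 (min d2 d3)"] conjI ballI impI)
        show "min d1 (min d2 d3) > 0" using d1 d2 d3 by simp
        fix t assume t: "t \<in> {a..B}" and ts: "\<bar>t - s\<bar> < min d1 (min d2 d3)"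
        define \<Delta> where "\<Delta> = u t - u s"
        have \<Delta>D: "\<Delta> \<in> DR" using uD[OF t] uD[OF s] DRs by (simp add: \<Delta>_def subspace_diff)
        have R\<Delta>: "R \<Delta> = R (u t) - R (u s)" unfolding \<Delta>_def by (rule Rdiff[OF uD[OF t] uD[OF s]])
        have n1: "norm (\<Delta> - (t - s) *\<^sub>R w s) \<le> e1 * \<bar>t - s\<bar>" using d1(2)[OF t] ts by (simp add: \<Delta>_def)
        have n2: "norm (\<Delta> - (t - s) *\<^sub>R w s) \<le> \<bar>t - s\<bar>" using d2(2)[OF t] ts by (simp add: \<Delta>_def)
        have n\<Delta>: "norm \<Delta> \<le> (W1 + 1) * \<bar>t - s\<bar>"
        proof -
          have "norm \<Delta> \<le> norm (\<Delta> - (t - s) *\<^sub>R w s) + norm ((t - s) *\<^sub>R w s)"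
            by (metis diff_add_cancel norm_triangle_ineq)
          also have "\<dots> \<le> \<bar>t - s\<bar> + \<bar>t - s\<bar> * W1" using n2 by (simp add: W1_def)
          finally show ?thesis by (simp add: algebra_simps)
        qed
        have nR: "norm (R \<Delta>) \<le> e2" using d3(2)[OF t] ts by (simp add: R\<Delta> dist_norm)
        have KK: "norm (R (u s)) + norm (R \<Delta>) \<le> K"
        proof -
          have "norm (R \<Delta>) \<le> norm (R (u t)) + norm (R (u s))" unfolding R\<Delta> by (rule norm_triangle_ineq4)
          then show ?thesis using Kb[OF t] Kb[OF s] by (simp add: K_def)
        qed
        have A: "\<bar>F (u s + \<Delta>) - F (u s) - inner (f (u s)) \<Delta>\<bar> \<le> L * norm (R \<Delta>) * norm \<Delta>"
          by (rule F_mvt[where DR=DR and K=K and L=L and R=R and F=F and f=f])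
             (assumption | rule Rl Radd Rdiff Lip DRs Fd L0' uD[OF s] \<Delta>D KK)+
        also have "\<dots> \<le> L * e2 * ((W1 + 1) * \<bar>t - s\<bar>)"
          using nR n\<Delta> L0' e2 by (intro mult_mono) (auto intro: mult_left_mono)
        also have "\<dots> \<le> e / 2 * \<bar>t - s\<bar>"
        proof -
          have p1: "L + 1 \<noteq> 0" "W1 + 1 \<noteq> 0" using M10 L0' by auto
          have "e2 * (W1 + 1) = (e / 2) / (L + 1)" using p1 by (simp add: e2_def)
          then have "L * e2 * (W1 + 1) = e / 2 * (L / (L + 1))" by (simp add: mult.assoc)
          also have "\<dots> \<le> e / 2 * 1" using e L0' by (intro mult_left_mono) auto
          finally show ?thesis by (metis abs_ge_zero mult.assoc mult_right_mono mult_1_right)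
        qed
        finally have A': "\<bar>F (u s + \<Delta>) - F (u s) - inner (f (u s)) \<Delta>\<bar> \<le> e / 2 * \<bar>t - s\<bar>" .
        have Bb: "\<bar>inner (f (u s)) (\<Delta> - (t - s) *\<^sub>R w s)\<bar> \<le> e / 2 * \<bar>t - s\<bar>"
        proof -
          have "\<bar>inner (f (u s)) (\<Delta> - (t - s) *\<^sub>R w s)\<bar> \<le> M1 * norm (\<Delta> - (t - s) *\<^sub>R w s)"
            unfolding M1_def by (rule Cauchy_Schwarz_ineq2)
          also have "\<dots> \<le> M1 * (e1 * \<bar>t - s\<bar>)" by (rule mult_left_mono[OF n1 M10(1)])
          also have "M1 * e1 = e / 2 * (M1 / (M1 + 1))" using M10 by (simp add: e1_def field_simps)
          then have "M1 * (e1 * \<bar>t - s\<bar>) \<le> e / 2 * \<bar>t - s\<bar>"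
          proof -
            have "M1 * e1 \<le> e / 2" unfolding \<open>M1 * e1 = _\<close> using e M10
              by (intro mult_left_le) auto
            then show ?thesis by (metis abs_ge_zero mult.assoc mult_right_mono)
          qed
          finally show ?thesis .
        qed
        have eq: "F (u t) - F (u s) - (t - s) *\<^sub>R inner (f (u s)) (w s)
            = (F (u s + \<Delta>) - F (u s) - inner (f (u s)) \<Delta>) + inner (f (u s)) (\<Delta> - (t - s) *\<^sub>R w s)"
          by (simp add: \<Delta>_def inner_diff_right)
        show "norm (F (u t) - F (u s) - (t - s) *\<^sub>R inner (f (u s)) (w s)) \<le> e * \<bar>t - s\<bar>"
          unfolding real_norm_def eq
          using A' Bb abs_triangle_ineq[of "F (u s + \<Delta>) - F (u s) - inner (f (u s)) \<Delta>" "inner (f (u s)) (\<Delta> - (t - s) *\<^sub>R w s)"]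
          by linarith
      qed
    qed
  qed
qed

lemma clamp_uc:
  fixes f :: "real \<Rightarrow> 'b::real_normed_vector"
  assumes "a \<le> B" "continuous_on {a..B} f"
  shows "uniformly_continuous_on UNIV (\<lambda>x. f (max a (min B x)))"
proof -
  have uc: "uniformly_continuous_on {a..B} f" by (rule compact_uniformly_continuous[OF assms(2)]) simp
  show ?thesis unfolding uniformly_continuous_on_def
  proof (intro allI impI)
    fix e :: real assume e: "e > 0"
    from uc e obtain d where d: "d > 0" "\<forall>x\<in>{a..B}. \<forall>x'\<in>{a..B}. dist x' x < d \<longrightarrow> dist (f x') (f x) < e"
      unfolding uniformly_continuous_on_def by blast
    show "\<exists>d>0. \<forall>x\<in>UNIV. \<forall>x'\<in>UNIV. dist x' x < d \<longrightarrow>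
        dist (f (max a (min B x'))) (f (max a (min B x))) < e"
      using d assms(1) by (intro exI[of _ d]) (auto simp: dist_real_def)
  qed
qed

lemma clamp_bd:
  fixes f :: "real \<Rightarrow> 'b::real_normed_vector"
  assumes "a \<le> B" "continuous_on {a..B} f"
  obtains M where "\<And>x. norm (f (max a (min B x))) \<le> M"
proof -
  have "compact (f ` {a..B})" by (rule compact_continuous_image[OF assms(2)]) simp
  then obtain M where "\<And>s. s \<in> {a..B} \<Longrightarrow> norm (f s) \<le> M"
    using compact_imp_bounded bounded_iff by (metis image_eqI)
  moreover have "a \<le> max a (min B x) \<and> max a (min B x) \<le> B" for x using assms(1) by auto
  ultimately show ?thesis using that[of M] by (meson atLeastAtMost_iff)
qed

lemma adj_bound:
  fixes T :: "'a::real_inner \<Rightarrow>\<^sub>L 'b::real_inner" and S :: "'b \<Rightarrow> 'a"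
  assumes "\<And>x y. inner (blinfun_apply T x) y = inner x (S y)"
  shows "norm (S y) \<le> norm T * norm y"
proof -
  have "inner (blinfun_apply T (S y)) y = inner (S y) (S y)" by (rule assms)
  then have "norm (S y) * norm (S y) = inner (blinfun_apply T (S y)) y"
    by (simp add: power2_norm_eq_inner[symmetric] power2_eq_square)
  also have "\<dots> \<le> norm (blinfun_apply T (S y)) * norm y" by (rule real_inner_class.Cauchy_Schwarz_ineq2[THEN abs_le_D1])
  also have "\<dots> \<le> norm T * norm (S y) * norm y" by (intro mult_right_mono norm_blinfun) auto
  finally have "norm (S y) * norm (S y) \<le> norm (S y) * (norm T * norm y)" by (simp add: algebra_simps)
  then show ?thesis by (cases "norm (S y) = 0") (auto simp: mult_le_cancel_left)
qed

lemma adj_diff: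
  fixes T1 T2 :: "'a::real_inner \<Rightarrow>\<^sub>L 'b::real_inner" and S1 S2 :: "'b \<Rightarrow> 'a"
  assumes "\<And>x y. inner (blinfun_apply T1 x) y = inner x (S1 y)"
    and "\<And>x y. inner (blinfun_apply T2 x) y = inner x (S2 y)"
  shows "norm (S1 y - S2 y) \<le> norm (T1 - T2) * norm y"
proof -
  have "\<And>x y. inner (blinfun_apply (T1 - T2) x) y = inner x (S1 y - S2 y)"
    using assms by (simp add: blinfun.diff_left inner_diff_left inner_diff_right)
  from adj_bound[OF this] show ?thesis .
qed

lemma adj_lin:
  fixes T :: "'a::real_inner \<Rightarrow>\<^sub>L 'b::real_inner" and S :: "'b \<Rightarrow> 'a"
  assumes "\<And>x y. inner (blinfun_apply T x) y = inner x (S y)"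
  shows "S (y1 - y2) = S y1 - S y2"
proof -
  define z where "z = S (y1 - y2) - (S y1 - S y2)"
  have "inner z z = inner z (S (y1 - y2)) - inner z (S y1) + inner z (S y2)"
    by (subst (2) z_def) (simp add: inner_diff_right)
  also have "\<dots> = inner (blinfun_apply T z) (y1 - y2) - inner (blinfun_apply T z) y1 + inner (blinfun_apply T z) y2"
    by (simp add: assms)
  also have "\<dots> = 0" by (simp add: inner_diff_right)
  finally show ?thesis by (simp add: z_def)
qed

lemma frac_lt: "(e::real) > 0 \<Longrightarrow> x \<ge> 0 \<Longrightarrow> e / 2 / (x + 1) * x < e / 2"
proof -
  assume e: "e > 0" and x: "x \<ge> 0"
  have "e / 2 / (x + 1) * x = e / 2 * (x / (x + 1))" by simp
  also have "\<dots> < e / 2 * 1" using e x by (intro mult_strict_left_mono) auto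
  finally show ?thesis by simp
qed

lemma ext_P:
  fixes g :: "real \<Rightarrow> 'u::{real_inner,complete_space} \<Rightarrow>\<^sub>L 'h::real_inner"
    and S :: "real \<Rightarrow> 'h \<Rightarrow> 'u" and w :: "real \<Rightarrow> 'h"
  assumes aB: "a < B" and cg: "continuous_on {a..B} g" and cw: "continuous_on {a..B} w"
    and adj: "\<And>s x y. s \<in> {a..<B} \<Longrightarrow> inner (blinfun_apply (g s) x) y = inner x (S s y)"
  obtains P where "continuous_on {a..B} P" "\<And>s. s \<in> {a..<B} \<Longrightarrow> P s = S s (w s)"
proof -
  have ucg: "uniformly_continuous_on {a..B} g" by (rule compact_uniformly_continuous[OF cg]) simp
  have ucw: "uniformly_continuous_on {a..B} w" by (rule compact_uniformly_continuous[OF cw]) simp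
  have "compact (g ` {a..B})" by (rule compact_continuous_image[OF cg]) simp
  then obtain Gb where Gb: "\<And>s. s \<in> {a..B} \<Longrightarrow> norm (g s) \<le> Gb"
    using compact_imp_bounded bounded_iff by (metis image_eqI)
  have "compact (w ` {a..B})" by (rule compact_continuous_image[OF cw]) simp
  then obtain Wb where Wb: "\<And>s. s \<in> {a..B} \<Longrightarrow> norm (w s) \<le> Wb"
    using compact_imp_bounded bounded_iff by (metis image_eqI)
  have Gb0: "Gb \<ge> 0" using Gb[of a] aB norm_ge_zero[of "g a"] by (meson atLeastAtMost_iff less_imp_le order_refl order_trans)
  have Wb0: "Wb \<ge> 0" using Wb[of a] aB norm_ge_zero[of "w a"] by (meson atLeastAtMost_iff less_imp_le order_refl order_trans)
  have uc: "uniformly_continuous_on {a..<B} (\<lambda>s. S s (w s))"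
    unfolding uniformly_continuous_on_def
  proof (intro allI impI)
    fix e :: real assume e: "e > 0"
    define e1 where "e1 = e / 2 / (Wb + 1)"
    define e2 where "e2 = e / 2 / (Gb + 1)"
    have e1: "e1 > 0" using e Wb0 by (simp add: e1_def)
    have e2: "e2 > 0" using e Gb0 by (simp add: e2_def)
    obtain d1 where d1: "d1 > 0" "\<forall>x\<in>{a..B}. \<forall>x'\<in>{a..B}. dist x' x < d1 \<longrightarrow> dist (g x') (g x) < e1"
      using ucg e1 unfolding uniformly_continuous_on_def by blast
    obtain d2 where d2: "d2 > 0" "\<forall>x\<in>{a..B}. \<forall>x'\<in>{a..B}. dist x' x < d2 \<longrightarrow> dist (w x') (w x) < e2"
      using ucw e2 unfolding uniformly_continuous_on_def by blast
    show "\<exists>d>0. \<forall>x\<in>{a..<B}. \<forall>x'\<in>{a..<B}. dist x' x < d \<longrightarrow> dist (S x' (w x')) (S x (w x)) < e"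
    proof (intro exI[of _ "min d1 d2"] conjI ballI impI)
      show "min d1 d2 > 0" using d1 d2 by simp
      fix s s' assume s: "s \<in> {a..<B}" and s': "s' \<in> {a..<B}" and ss: "dist s' s < min d1 d2"
      have sB: "s \<in> {a..B}" "s' \<in> {a..B}" using s s' by auto
      have g1: "norm (g s' - g s) < e1" using d1(2) sB ss by (auto simp: dist_norm)
      have w1: "norm (w s' - w s) < e2" using d2(2) sB ss by (auto simp: dist_norm)
      have "norm (S s' (w s') - S s (w s')) \<le> norm (g s' - g s) * norm (w s')"
        by (rule adj_diff) (use adj s s' in auto)
      also have "\<dots> \<le> e1 * Wb" using g1 Wb[OF sB(2)] e1 by (intro mult_mono) auto
      also have "\<dots> < e / 2" unfolding e1_def by (rule frac_lt[OF e Wb0])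
      finally have A: "norm (S s' (w s') - S s (w s')) < e / 2" .
      have "S s (w s') - S s (w s) = S s (w s' - w s)"
        by (rule adj_lin[symmetric]) (use adj s in auto)
      then have "norm (S s (w s') - S s (w s)) = norm (S s (w s' - w s))" by simp
      also have "\<dots> \<le> norm (g s) * norm (w s' - w s)" by (rule adj_bound) (use adj s in auto)
      also have "\<dots> \<le> Gb * e2" using w1 Gb[OF sB(1)] Gb0 by (intro mult_mono) auto
      also have "\<dots> < e / 2" unfolding e2_def using frac_lt[OF e Gb0] by (simp add: mult.commute)
      finally have Bn: "norm (S s (w s') - S s (w s)) < e / 2" .
      have "dist (S s' (w s')) (S s (w s)) \<le> norm (S s' (w s') - S s (w s')) + norm (S s (w s') - S s (w s))"
        unfolding dist_norm by (metis diff_add_cancel add_diff_eq norm_triangle_ineq add.commute diff_diff_eq2)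
      then show "dist (S s' (w s')) (S s (w s)) < e" using A Bn by linarith
    qed
  qed
  obtain P where P: "uniformly_continuous_on (closure {a..<B}) P" "\<And>x. x \<in> {a..<B} \<Longrightarrow> S x (w x) = P x"
    using uniformly_continuous_on_extension_on_closure[OF uc] by metis
  show ?thesis
    using that[of P] P aB uniformly_continuous_imp_continuous by fastforce
qed

lemma f_cont:
  fixes R f :: "'h::real_inner \<Rightarrow> 'h" and u :: "real \<Rightarrow> 'h"
  assumes Lipall: "\<forall>K>0. \<exists>L. \<forall>x\<in>DR. \<forall>y\<in>DR. norm (R x) \<le> K \<and> norm (R y) \<le> K \<longrightarrow>
                   norm (f x - f y) \<le> L * norm (R (x - y))"
    and Rdiff: "\<And>x y. x \<in> DR \<Longrightarrow> y \<in> DR \<Longrightarrow> R (x - y) = R x - R y"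
    and uD: "\<And>s. s \<in> {a..B} \<Longrightarrow> u s \<in> DR"
    and cRu: "continuous_on {a..B} (\<lambda>s. R (u s))"
  shows "continuous_on {a..B} (\<lambda>s. f (u s))"
proof -
  have "compact ((\<lambda>s. R (u s)) ` {a..B})" by (rule compact_continuous_image[OF cRu]) simp
  then obtain Kb where Kb: "\<And>s. s \<in> {a..B} \<Longrightarrow> norm (R (u s)) \<le> Kb"
    using compact_imp_bounded bounded_iff by (metis image_eqI)
  obtain L where L: "\<forall>x\<in>DR. \<forall>y\<in>DR. norm (R x) \<le> \<bar>Kb\<bar> + 1 \<and> norm (R y) \<le> \<bar>Kb\<bar> + 1 \<longrightarrow>
                   norm (f x - f y) \<le> L * norm (R (x - y))"
    using Lipall by (metis abs_ge_zero add_nonneg_pos zero_less_one)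
  define L' where "L' = max L 0"
  show ?thesis unfolding continuous_on_iff
  proof (intro ballI allI impI)
    fix x e assume x: "x \<in> {a..B}" and e: "(e::real) > 0"
    have e': "e / (L' + 1) > 0" using e by (simp add: L'_def)
    obtain d where d: "d > 0" "\<forall>x'\<in>{a..B}. dist x' x < d \<longrightarrow> dist (R (u x')) (R (u x)) < e / (L' + 1)"
      using cRu x e' unfolding continuous_on_iff by blast
    show "\<exists>d>0. \<forall>x'\<in>{a..B}. dist x' x < d \<longrightarrow> dist (f (u x')) (f (u x)) < e"
    proof (intro exI[of _ d] conjI ballI impI)
      show "d > 0" by (rule d(1))
      fix x' assume x': "x' \<in> {a..B}" and dx: "dist x' x < d"
      have "norm (f (u x') - f (u x)) \<le> L * norm (R (u x' - u x))"
        using L uD[OF x] uD[OF x'] Kb[OF x] Kb[OF x'] by (smt (verit))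
      also have "\<dots> \<le> L' * norm (R (u x') - R (u x))"
        by (simp add: Rdiff[OF uD[OF x'] uD[OF x]] L'_def mult_right_mono)
      also have "\<dots> \<le> L' * (e / (L' + 1))"
        using d(2) x' dx by (intro mult_left_mono) (auto simp: dist_norm L'_def)
      also have "\<dots> < e"
      proof -
        have "L' * (e / (L' + 1)) = e * (L' / (L' + 1))" by simp
        also have "\<dots> < e * 1" using e by (intro mult_strict_left_mono) (auto simp: L'_def)
        finally show ?thesis by simp
      qed
      finally show "dist (f (u x')) (f (u x)) < e" by (simp add: dist_norm)
    qed
  qed
qed

theorem proposition3p10:
  fixes DA DR :: "'h::{real_inner,complete_space} set"
    and A R f :: "'h \<Rightarrow> 'h"
    and F :: "'h \<Rightarrow> real"
    and jW :: "'h \<Rightarrow> 'w::{real_inner,complete_space}"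
    and CW :: real
    and B1 :: "real \<Rightarrow> 'u1::{real_inner,complete_space} \<Rightarrow>\<^sub>L 'h"
    and B1s :: "real \<Rightarrow> 'h \<Rightarrow> 'u1"
    and B2 :: "real \<Rightarrow> 'u2::{real_inner,complete_space} \<Rightarrow>\<^sub>L 'h"
    and B2s :: "real \<Rightarrow> 'h \<Rightarrow> 'u2"
    and t :: "nat \<Rightarrow> real"
    and tau :: real
    and m M :: "nat \<Rightarrow> real"
    and Tbar d :: "nat \<Rightarrow> real"
    and u ut :: "real \<Rightarrow> 'h"
    and u0 u1 :: 'h
  assumes A_sa: "selfadjoint_op DA A"
    and A_pos: "positive_op DA A"
    and A_coer: "coercive_op DA A"
    and R_sqrt: "is_sqrt_op DA A DR R"
    \<comment> \<open>W: Hilbert space with H embedded, ||u||_W^2 \<le> C ||u||_H^2\<close>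
    and jW_lin: "linear jW" and jW_inj: "inj jW"
    and jW_bd: "\<forall>x. (norm (jW x))\<^sup>2 \<le> CW * (norm x)\<^sup>2"
    \<comment> \<open>f : V \<rightarrow> H locally Lipschitz\<close>
    and f_lip: "\<forall>K>0. \<exists>L. \<forall>x\<in>DR. \<forall>y\<in>DR. norm (R x) \<le> K \<and> norm (R y) \<le> K \<longrightarrow>
                   norm (f x - f y) \<le> L * norm (R (x - y))"
    \<comment> \<open>F(0) = 0 and F'(u) v = <f(u), v> (Frechet derivative on V)\<close>
    and F0: "F 0 = 0"
    and F_deriv: "\<forall>x\<in>DR. \<forall>\<epsilon>>0. \<exists>\<delta>>0. \<forall>v\<in>DR. norm (R v) < \<delta> \<longrightarrow>
                   \<bar>F (x + v) - F x - inner (f x) v\<bar> \<le> \<epsilon> * norm (R v)"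
    \<comment> \<open>adjoints\<close>
    and B1s_adj: "\<forall>s x y. inner (blinfun_apply (B1 s) x) y = inner x (B1s s y)"
    and B2s_adj: "\<forall>s x y. inner (blinfun_apply (B2 s) x) y = inner x (B2s s y)"
    and B_prod: "\<forall>s>0. \<forall>x. blinfun_apply (B1 s) (B1s s (blinfun_apply (B2 s) (B2s s x))) = 0"
    \<comment> \<open>switching sequence\<close>
    and t0: "t 0 = 0" and t_mono: "strict_mono t"
    and B2_off: "\<forall>n. \<forall>s\<in>{t (2*n)..<t (2*n+1)}. B2 s = 0"
    and B1_off: "\<forall>n. \<forall>s\<in>{t (2*n+1)..<t (2*n+2)}. B1 s = 0"
    and B1_C1: "\<forall>n. \<exists>g g'. (\<forall>s\<in>{t (2*n)..<t (2*n+1)}. g s = B1 s) \<and>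
                  (\<forall>s\<in>{t (2*n)..t (2*n+1)}. (g has_vector_derivative g' s) (at s within {t (2*n)..t (2*n+1)})) \<and>
                  continuous_on {t (2*n)..t (2*n+1)} g'"
    and B2_C1: "\<forall>n. \<exists>g g'. (\<forall>s\<in>{t (2*n+1)..<t (2*n+2)}. g s = B2 s) \<and>
                  (\<forall>s\<in>{t (2*n+1)..t (2*n+2)}. (g has_vector_derivative g' s) (at s within {t (2*n+1)..t (2*n+2)})) \<and>
                  continuous_on {t (2*n+1)..t (2*n+2)} g'"
    and tau_pos: "tau > 0"
    \<comment> \<open>condition (i)\<close>
    and cond_i: "\<forall>n. 0 < m n \<and> m n \<le> M n \<and>
                  (\<forall>s\<in>{t (2*n)..<t (2*n+1)}. \<forall>x.
                     m n * (norm (jW x))\<^sup>2 \<le> (norm (B1s s x))\<^sup>2 \<and>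
                     (norm (B1s s x))\<^sup>2 \<le> M n * (norm (jW x))\<^sup>2)"
    \<comment> \<open>observability on the undelayed intervals\<close>
    and Tbar_lt: "\<forall>n. Tbar n < t (2*n+1) - t (2*n)"
    and obs: "\<forall>n. \<forall>T. Tbar n < T \<and> T \<le> t (2*n+1) - t (2*n) \<longrightarrow>
               (\<exists>c>0. \<forall>w wt. weak_sol_on DR R f (\<lambda>s. blinfun_apply (B1 s) (B1s s (wt s)))
                                 (t (2*n)) (t (2*n+1)) w wt \<longrightarrow>
                  energy R F w wt (t (2*n) + T)
                    \<le> c * integral {t (2*n)..t (2*n) + T} (\<lambda>s. (norm (B1s s (wt s)))\<^sup>2))"
    and d_pos: "\<forall>n. d n > 0"
    and obs_d: "\<forall>n. \<forall>w wt. weak_sol_on DR R f (\<lambda>s. blinfun_apply (B1 s) (B1s s (wt s)))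
                                 (t (2*n)) (t (2*n+1)) w wt \<longrightarrow>
                  energy R F w wt (t (2*n+1))
                    \<le> d n * integral {t (2*n)..t (2*n+1)} (\<lambda>s. (norm (B1s s (wt s)))\<^sup>2)"
    \<comment> \<open>u is a (global) solution of the switched delayed problem\<close>
    and u_sol: "\<forall>b\<ge>0. weak_sol_on DR R f
                  (\<lambda>s. blinfun_apply (B1 s) (B1s s (ut s)) + blinfun_apply (B2 s) (B2s s (ut (s - tau))))
                  0 b u ut"
    and u_init: "u 0 = u0" "ut 0 = u1" "u0 \<in> DR"
  shows "\<forall>n. energy R F u ut (t (2*n+1)) \<le> (d n / (d n + 1)) * energy R F u ut (t (2*n))"
proof -
  have lin: "lin_op_on DR R" using R_sqrt unfolding is_sqrt_op_def selfadjoint_op_def by blast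
  have DRs: "subspace DR" and Rlin: "\<And>x y c. x \<in> DR \<Longrightarrow> y \<in> DR \<Longrightarrow> R (x + c *\<^sub>R y) = R x + c *\<^sub>R R y"
    using lin unfolding lin_op_on_def by auto
  have D0: "0 \<in> DR" using DRs by (simp add: subspace_0)
  have R0: "R 0 = 0" using Rlin[OF D0 D0, of 1] by simp
  have Rl: "R (c *\<^sub>R x) = c *\<^sub>R R x" if "x \<in> DR" for x c using Rlin[OF D0 that, of c] R0 by simp
  have Radd: "R (x + y) = R x + R y" if "x \<in> DR" "y \<in> DR" for x y using Rlin[OF that, of 1] by simp
  have Rdiff: "R (x - y) = R x - R y" if "x \<in> DR" "y \<in> DR" for x y using Rlin[OF that, of "-1"] by simp
  show ?thesis
  proof
    fix n
    define a where "a = t (2*n)"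
    define B where "B = t (2*n+1)"
    have aB: "a < B" unfolding a_def B_def using t_mono by (simp add: strict_mono_def)
    have a0: "0 \<le> a" unfolding a_def using t0 t_mono
      by (metis le0 strict_mono_less_eq)
    define Gg where "Gg s = blinfun_apply (B1 s) (B1s s (ut s)) + blinfun_apply (B2 s) (B2s s (ut (s - tau)))" for s
    have ws0: "weak_sol_on DR R f Gg 0 B u ut" using u_sol aB a0 unfolding Gg_def by auto
    have uD0: "\<And>s. s \<in> {0..B} \<Longrightarrow> u s \<in> DR" and cu0: "continuous_on {0..B} u"
      and cRu0: "continuous_on {0..B} (\<lambda>s. R (u s))"
      and der0: "\<And>s. s \<in> {0..B} \<Longrightarrow> (u has_vector_derivative ut s) (at s within {0..B})"
      and cut0: "continuous_on {0..B} ut"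
      and W0: "\<And>v s r. v \<in> DR \<Longrightarrow> 0 \<le> s \<Longrightarrow> s \<le> r \<Longrightarrow> r \<le> B \<Longrightarrow>
        ((\<lambda>\<sigma>. inner (f (u \<sigma>)) v - inner (R (u \<sigma>)) (R v) - inner (Gg \<sigma>) v)
           has_integral (inner (ut r) v - inner (ut s) v)) {s..r}"
      using ws0 unfolding weak_sol_on_def by blast+
    have sub: "{a..B} \<subseteq> {0..B}" using a0 by auto
    have uD: "\<And>s. s \<in> {a..B} \<Longrightarrow> u s \<in> DR" using uD0 sub by auto
    have cu: "continuous_on {a..B} u" using continuous_on_subset[OF cu0 sub] .
    have cRu: "continuous_on {a..B} (\<lambda>s. R (u s))" using continuous_on_subset[OF cRu0 sub] .
    have cut: "continuous_on {a..B} ut" using continuous_on_subset[OF cut0 sub] .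
    have der: "\<And>s. s \<in> {a..B} \<Longrightarrow> (u has_vector_derivative ut s) (at s within {a..B})"
      using der0 sub by (meson has_vector_derivative_within_subset subsetD)
    have B2z: "blinfun_apply (B2 s) x = 0" if "s \<in> {a..<B}" for s x
      using B2_off that unfolding a_def B_def by auto
    have Gg_eq: "Gg s = blinfun_apply (B1 s) (B1s s (ut s))" if "s \<in> {a..<B}" for s
      using B2z[OF that] by (simp add: Gg_def)
    obtain g g' where g: "\<And>s. s \<in> {a..<B} \<Longrightarrow> g s = B1 s"
      and gd: "\<And>s. s \<in> {a..B} \<Longrightarrow> (g has_vector_derivative g' s) (at s within {a..B})"
      using B1_C1 unfolding a_def B_def by blast
    have cg: "continuous_on {a..B} g" by (rule continuous_on_vector_derivative[OF gd])
    have gadj: "inner (blinfun_apply (g s) x) y = inner x (B1s s y)" if "s \<in> {a..<B}" for s x y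
      using B1s_adj g[OF that] by simp
    obtain P where cP: "continuous_on {a..B} P" and P: "\<And>s. s \<in> {a..<B} \<Longrightarrow> P s = B1s s (ut s)"
      using ext_P[OF aB cg cut gadj] by blast
    define h where "h s = f (u s) - blinfun_apply (g s) (P s)" for s
    have cfu: "continuous_on {a..B} (\<lambda>s. f (u s))" by (rule f_cont[OF f_lip Rdiff uD cRu]) auto
    have ch: "continuous_on {a..B} h" unfolding h_def using cfu cg cP by (intro continuous_intros)
    have h_eq: "h s = f (u s) - Gg s" if "s \<in> {a..<B}" for s
      using Gg_eq[OF that] g[OF that] P[OF that] by (simp add: h_def)
    define cl where "cl s = max a (min B s)" for s
    have cl_id: "cl s = s" if "s \<in> {a..B}" for s using that by (simp add: cl_def)
    have aBle: "a \<le> B" using aB by simp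
    obtain Wb where Wb: "\<And>x. norm (ut (cl x)) \<le> Wb" using clamp_bd[OF aBle cut] unfolding cl_def by blast
    obtain Rb where Rb: "\<And>x. norm (R (u (cl x))) \<le> Rb" using clamp_bd[OF aBle cRu] unfolding cl_def by blast
    obtain Hb where Hb: "\<And>x. norm (h (cl x)) \<le> Hb" using clamp_bd[OF aBle ch] unfolding cl_def by blast
    have Q: "((\<lambda>s. inner (h (cl s)) (ut (cl s))) has_integral
        ((norm (ut (cl B)))\<^sup>2 + (norm (R (u (cl B))))\<^sup>2 - (norm (ut (cl a)))\<^sup>2 - (norm (R (u (cl a))))\<^sup>2) / 2) {a..B}"
    proof (rule quad_core[where u=u and w="\<lambda>s. ut (cl s)" and Ru="\<lambda>s. R (u (cl s))" and h="\<lambda>s. h (cl s)", OF aB])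
      show "(u has_vector_derivative ut (cl s)) (at s within {a..B})" if "s \<in> {a..B}" for s
        using der[OF that] cl_id[OF that] by simp
      show "uniformly_continuous_on UNIV (\<lambda>s. ut (cl s))" unfolding cl_def by (rule clamp_uc[OF aBle cut])
      show "uniformly_continuous_on UNIV (\<lambda>s. R (u (cl s)))" unfolding cl_def by (rule clamp_uc[OF aBle cRu])
      show "uniformly_continuous_on UNIV (\<lambda>s. h (cl s))" unfolding cl_def by (rule clamp_uc[OF aBle ch])
      show "norm (ut (cl s)) \<le> Wb" "norm (R (u (cl s))) \<le> Rb" "norm (h (cl s)) \<le> Hb" for s
        using Wb Rb Hb by auto
      fix x y assume xy: "a \<le> x" "x \<le> y" "y \<le> B"
      define v where "v = u y - u x"
      have vD: "v \<in> DR" unfolding v_def using uD xy DRs by (simp add: subspace_diff)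
      have Rv: "R v = R (u y) - R (u x)" unfolding v_def by (rule Rdiff) (use uD xy in auto)
      have I0: "((\<lambda>\<sigma>. inner (f (u \<sigma>)) v - inner (R (u \<sigma>)) (R v) - inner (Gg \<sigma>) v)
           has_integral (inner (ut y) v - inner (ut x) v)) {x..y}"
        by (rule W0[OF vD]) (use xy a0 in auto)
      have val: "inner (ut y) v - inner (ut x) v = inner (ut (cl y) - ut (cl x)) (u y - u x)"
        using cl_id[of x] cl_id[of y] xy by (simp add: v_def inner_diff_left)
      show "((\<lambda>\<sigma>. inner (h (cl \<sigma>)) (u y - u x) - inner (R (u (cl \<sigma>))) (R (u (cl y)) - R (u (cl x))))
          has_integral inner (ut (cl y) - ut (cl x)) (u y - u x)) {x..y}"
      proof (rule has_integral_spike_finite[of "{B}", OF _ _ I0[unfolded val, unfolded v_def]])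
        fix \<sigma> assume s: "\<sigma> \<in> {x..y} - {B}"
        then have sab: "\<sigma> \<in> {a..<B}" "\<sigma> \<in> {a..B}" using xy by auto
        show "inner (h (cl \<sigma>)) (u y - u x) - inner (R (u (cl \<sigma>))) (R (u (cl y)) - R (u (cl x))) =
          inner (f (u \<sigma>)) (u y - u x) - inner (R (u \<sigma>)) (R (u y - u x)) - inner (Gg \<sigma>) (u y - u x)"
          using cl_id[OF sab(2)] cl_id[of x] cl_id[of y] xy h_eq[OF sab(1)] Rv
          by (simp add: v_def inner_diff_left)
      qed simp
    qed
    have clB: "cl B = B" and cla: "cl a = a" using aB by (auto intro: cl_id)
    define q where "q = ((norm (ut B))\<^sup>2 + (norm (R (u B)))\<^sup>2 - (norm (ut a))\<^sup>2 - (norm (R (u a)))\<^sup>2) / 2"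
    have Q': "((\<lambda>s. inner (h s) (ut s)) has_integral q) {a..B}"
    proof -
      have Q0: "((\<lambda>s. inner (h (cl s)) (ut (cl s))) has_integral q) {a..B}"
        using Q unfolding clB cla q_def[symmetric] .
      show ?thesis by (rule has_integral_spike_finite[of "{}", OF _ _ Q0]) (auto simp: cl_id)
    qed
    have Fc: "((\<lambda>s. inner (f (u s)) (ut s)) has_integral F (u B) - F (u a)) {a..B}"
      by (rule F_chain[OF Rl Radd Rdiff DRs F_deriv f_lip aBle uD cRu der]) auto
    have Iq: "((\<lambda>s. (norm (B1s s (ut s)))\<^sup>2) has_integral F (u B) - F (u a) - q) {a..B}"
    proof (rule has_integral_spike_finite[of "{B}", OF _ _ has_integral_diff[OF Fc Q']])
      fix s assume "s \<in> {a..B} - {B}"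
      then have s: "s \<in> {a..<B}" by auto
      have "inner (f (u s)) (ut s) - inner (h s) (ut s) = inner (blinfun_apply (g s) (P s)) (ut s)"
        by (simp add: h_def inner_diff_left)
      also have "\<dots> = inner (P s) (B1s s (ut s))" by (rule gadj[OF s])
      also have "\<dots> = (norm (B1s s (ut s)))\<^sup>2" by (simp add: P[OF s] power2_norm_eq_inner)
      finally show "(norm (B1s s (ut s)))\<^sup>2 = inner (f (u s)) (ut s) - inner (h s) (ut s)" by simp
    qed simp
    have Eeq: "F (u B) - F (u a) - q = energy R F u ut a - energy R F u ut B"
      by (simp add: q_def energy_def field_simps)
    have wsn: "weak_sol_on DR R f (\<lambda>s. blinfun_apply (B1 s) (B1s s (ut s))) a B u ut"
      unfolding weak_sol_on_def
    proof (intro conjI ballI allI impI)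
      show "a \<le> B" by (rule aBle)
      show "u s \<in> DR" if "s \<in> {a..B}" for s using uD that .
      show "continuous_on {a..B} u" by (rule cu)
      show "continuous_on {a..B} (\<lambda>s. R (u s))" by (rule cRu)
      show "(u has_vector_derivative ut s) (at s within {a..B})" if "s \<in> {a..B}" for s using der that .
      show "continuous_on {a..B} ut" by (rule cut)
      fix v s r assume v: "v \<in> DR" and sr: "a \<le> s \<and> s \<le> r \<and> r \<le> B"
      show "((\<lambda>\<sigma>. inner (f (u \<sigma>)) v - inner (R (u \<sigma>)) (R v) - inner (blinfun_apply (B1 \<sigma>) (B1s \<sigma> (ut \<sigma>))) v)
           has_integral (inner (ut r) v - inner (ut s) v)) {s..r}"
      proof (rule has_integral_spike_finite[of "{B}", OF _ _ W0[OF v]])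
        fix \<sigma> assume "\<sigma> \<in> {s..r} - {B}"
        then have "\<sigma> \<in> {a..<B}" using sr by auto
        then show "inner (f (u \<sigma>)) v - inner (R (u \<sigma>)) (R v) - inner (blinfun_apply (B1 \<sigma>) (B1s \<sigma> (ut \<sigma>))) v =
          inner (f (u \<sigma>)) v - inner (R (u \<sigma>)) (R v) - inner (Gg \<sigma>) v" by (simp add: Gg_eq)
      qed (use sr a0 in auto)
    qed
    have obs: "energy R F u ut B \<le> d n * integral {a..B} (\<lambda>s. (norm (B1s s (ut s)))\<^sup>2)"
      using obs_d wsn unfolding a_def B_def by blast
    have int: "integral {a..B} (\<lambda>s. (norm (B1s s (ut s)))\<^sup>2) = energy R F u ut a - energy R F u ut B"
      using integral_unique[OF Iq] Eeq by simp
    have dn: "d n > 0" using d_pos by blast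
    from obs int have "energy R F u ut B * (d n + 1) \<le> d n * energy R F u ut a"
      by (simp add: algebra_simps)
    then have "energy R F u ut B \<le> d n * energy R F u ut a / (d n + 1)"
      using dn by (simp add: pos_le_divide_eq)
    then show "energy R F u ut (t (2*n+1)) \<le> (d n / (d n + 1)) * energy R F u ut (t (2*n))"
      unfolding a_def B_def by simp
  qed
qed

end
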